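(* Let $G_1$ and $G_2$ be connected graphs on disjoint vertex sets, let $v_1\in V(G_1)$, $v_2\in V(G_2)$, and let $G$ be the graph with $V(G)=V(G_1)\cup V(G_2)$ and $E(G)=E(G_1)\cup E(G_2)\cup\{v_1v_2\}$. Then \[ \operatorname{cdim}(G)=\begin{cases}\operatorname{cdim}(G_1)+\operatorname{cdim}(G_2)+1 & \text{if both } G_1 \text{ and } G_2 \text{ force an all-ones representation},\\ \operatorname{cdim}(G_1)+\operatorname{cdim}(G_2) & \text{otherwise.}\end{cases} \]
   Context: All graphs are finite, simple, undirected and nonempty. For distinct vertices $v,w$ of a graph $G$, $\kappa_G(v,w)$ is the maximum number of internally vertex-disjoint $v$–$w$ paths in $G$ (an edge $vw$ counts as one such path); $\kappa_G(v,v)=\infty$. For an ordered vertex set $W=(w_1,\ldots,w_k)$, $r_G(v,W)=[\kappa_G(v,w_1),\ldots,\kappa_G(v,w_k)]$. $W$ is resolving for $G$ if $r_G(v_1,W)=r_G(v_2,W)$ implies $v_1=v_2$. A (connectivity) basis is a resolving set of minimum cardinality, and $\operatorname{cdim}(G)$ is its cardinality. A graph $G$ forces an all-ones representation if for every basis $B$ of $G$ there is a vertex $v\in V(G)$ with $r_G(v,B)=[1,\ldots,1]$ (all entries equal to $1$). In particular the one-vertex graph $K_1$, whose only basis is $\emptyset$ and whose vertex has the empty representation vector (vacuously all ones), forces an all-ones representation. *)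

theory Defs
  imports Main "HOL-Library.Extended_Nat"
begin

definition graph :: "'a set \<Rightarrow> 'a set set \<Rightarrow> bool" where
  "graph V E \<longleftrightarrow> finite V \<and> V \<noteq> {} \<and>
     (\<forall>e\<in>E. \<exists>u v. e = {u, v} \<and> u \<in> V \<and> v \<in> V \<and> u \<noteq> v)"

definition is_path :: "'a set \<Rightarrow> 'a set set \<Rightarrow> 'a \<Rightarrow> 'a \<Rightarrow> 'a list \<Rightarrow> bool" where
  "is_path V E v w p \<longleftrightarrow> length p \<ge> 2 \<and> hd p = v \<and> last p = w \<and> distinct p \<and>
     set p \<subseteq> V \<and> (\<forall>i. Suc i < length p \<longrightarrow> {p ! i, p ! Suc i} \<in> E)"

definition connected_graph :: "'a set \<Rightarrow> 'a set set \<Rightarrow> bool" where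
  "connected_graph V E \<longleftrightarrow> (\<forall>v\<in>V. \<forall>w\<in>V. v \<noteq> w \<longrightarrow> (\<exists>p. is_path V E v w p))"

definition interior :: "'a list \<Rightarrow> 'a set" where
  "interior p = set (butlast (tl p))"

definition disjoint_paths :: "'a set \<Rightarrow> 'a set set \<Rightarrow> 'a \<Rightarrow> 'a \<Rightarrow> 'a list set \<Rightarrow> bool" where
  "disjoint_paths V E v w P \<longleftrightarrow> (\<forall>p\<in>P. is_path V E v w p) \<and>
     (\<forall>p\<in>P. \<forall>q\<in>P. p \<noteq> q \<longrightarrow> interior p \<inter> interior q = {})"

definition kappa :: "'a set \<Rightarrow> 'a set set \<Rightarrow> 'a \<Rightarrow> 'a \<Rightarrow> enat" where
  "kappa V E v w = (if v = w then \<infinity>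
     else enat (Max {card P | P. finite P \<and> disjoint_paths V E v w P}))"

definition rep :: "'a set \<Rightarrow> 'a set set \<Rightarrow> 'a \<Rightarrow> 'a list \<Rightarrow> enat list" where
  "rep V E v W = map (kappa V E v) W"

definition resolving :: "'a set \<Rightarrow> 'a set set \<Rightarrow> 'a list \<Rightarrow> bool" where
  "resolving V E W \<longleftrightarrow> distinct W \<and> set W \<subseteq> V \<and>
     (\<forall>v1\<in>V. \<forall>v2\<in>V. rep V E v1 W = rep V E v2 W \<longrightarrow> v1 = v2)"

definition cdim :: "'a set \<Rightarrow> 'a set set \<Rightarrow> nat" where
  "cdim V E = Min {length W | W. resolving V E W}"

definition is_basis :: "'a set \<Rightarrow> 'a set set \<Rightarrow> 'a list \<Rightarrow> bool" where
  "is_basis V E B \<longleftrightarrow> resolving V E B \<and> length B = cdim V E"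

definition forces_all_ones :: "'a set \<Rightarrow> 'a set set \<Rightarrow> bool" where
  "forces_all_ones V E \<longleftrightarrow>
     (\<forall>B. is_basis V E B \<longrightarrow> (\<exists>v\<in>V. rep V E v B = replicate (length B) 1))"

end

theory Submission
  imports Defs
begin


definition edges_ok :: "'a set set \<Rightarrow> 'a list \<Rightarrow> bool" where
  "edges_ok E p \<longleftrightarrow> (\<forall>i. Suc i < length p \<longrightarrow> {p ! i, p ! Suc i} \<in> E)"

lemma is_path_alt: "is_path V E v w p \<longleftrightarrow> length p \<ge> 2 \<and> hd p = v \<and> last p = w \<and> distinct p \<and>
     set p \<subseteq> V \<and> edges_ok E p"
  unfolding is_path_def edges_ok_def by simp

lemma edges_mono: "E \<subseteq> E' \<Longrightarrow> edges_ok E p \<Longrightarrow> edges_ok E' p"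
  unfolding edges_ok_def by blast

lemma edges_rev:
  assumes "edges_ok E p" shows "edges_ok E (rev p)"
  unfolding edges_ok_def
proof (intro allI impI)
  fix i assume i: "Suc i < length (rev p)"
  let ?n = "length p"
  have a: "rev p ! i = p ! (?n - Suc i)" using i by (simp add: rev_nth)
  have b: "rev p ! Suc i = p ! (?n - Suc (Suc i))" using i by (simp add: rev_nth)
  have "{p ! (?n - Suc (Suc i)), p ! Suc (?n - Suc (Suc i))} \<in> E"
    using assms i unfolding edges_ok_def by simp
  moreover have "Suc (?n - Suc (Suc i)) = ?n - Suc i" using i by simp
  ultimately show "{rev p ! i, rev p ! Suc i} \<in> E" using a b by (simp add: insert_commute)
qed

lemma edges_append:
  assumes "edges_ok E p" "edges_ok E q" "p \<noteq> []" "q \<noteq> []" "{last p, hd q} \<in> E"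
  shows "edges_ok E (p @ q)"
  unfolding edges_ok_def
proof (intro allI impI)
  fix i assume i: "Suc i < length (p @ q)"
  consider "Suc i < length p" | "Suc i = length p" | "Suc i > length p" by linarith
  then show "{(p @ q) ! i, (p @ q) ! Suc i} \<in> E"
  proof cases
    case 1 then show ?thesis using assms(1) by (simp add: nth_append edges_ok_def)
  next
    case 2
    then have il: "i < length p" by simp
    have ii: "i = length p - 1" using 2 by simp
    have "(p @ q) ! i = p ! i" using il by (rule nth_append_left)
    also have "\<dots> = last p" using ii assms(3) by (simp add: last_conv_nth)
    finally have "(p @ q) ! i = last p" .
    moreover have "(p @ q) ! Suc i = hd q" using 2 assms(4) by (simp add: nth_append hd_conv_nth)
    ultimately show ?thesis using assms(5) by simp
  next
    case 3
    then obtain k where k: "i = length p + k" by (metis less_Suc_eq_le le_Suc_ex)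
    have "Suc k < length q" using i k by simp
    then have "{q ! k, q ! Suc k} \<in> E" using assms(2) by (simp add: edges_ok_def)
    moreover have "Suc i = length p + Suc k" using k by simp
    ultimately show ?thesis using k by (simp add: nth_append)
  qed
qed

lemma interior_nth: "0 < k \<Longrightarrow> Suc k < length p \<Longrightarrow> p ! k \<in> interior p"
  unfolding interior_def
proof -
  assume k: "0 < k" "Suc k < length p"
  have "butlast (tl p) ! (k - 1) = p ! k" using k by (simp add: nth_butlast nth_tl)
  moreover have "k - 1 < length (butlast (tl p))" using k by simp
  ultimately show "p ! k \<in> set (butlast (tl p))" by (metis nth_mem)
qed

lemma graph_edge: "graph V E \<Longrightarrow> {a, b} \<in> E \<Longrightarrow> a \<in> V \<and> b \<in> V"
proof -
  assume g: "graph V E" and e: "{a, b} \<in> E"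
  then obtain u v where uv: "{a, b} = {u, v}" "u \<in> V" "v \<in> V" unfolding graph_def by blast
  have "a \<in> {u, v}" "b \<in> {u, v}" using uv(1) by (metis insertI1, metis insertI1 insert_commute)
  then show ?thesis using uv by auto
qed

lemma conn_walk:
  assumes "connected_graph V E" "x \<in> V" "y \<in> V"
  shows "\<exists>p. p \<noteq> [] \<and> hd p = x \<and> last p = y \<and> distinct p \<and> set p \<subseteq> V \<and> edges_ok E p"
proof (cases "x = y")
  case True
  then show ?thesis using assms by (intro exI[of _ "[x]"]) (simp add: edges_ok_def)
next
  case False
  then obtain p where "is_path V E x y p" using assms unfolding connected_graph_def by blast
  then show ?thesis unfolding is_path_alt by (intro exI[of _ p]) auto
qed

lemma rep_self: "x \<in> set W \<Longrightarrow> rep V E x W = rep V E y W \<Longrightarrow> y = x"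
proof -
  assume x: "x \<in> set W" and r: "rep V E x W = rep V E y W"
  have "kappa V E x x = kappa V E y x" using x r unfolding rep_def map_eq_conv by blast
  then show "y = x" unfolding kappa_def by (cases "y = x") auto
qed

lemma rep_len: "length (rep V E x W) = length W" by (simp add: rep_def)

lemma res_bound: "graph V E \<Longrightarrow> resolving V E W \<Longrightarrow> length W \<le> card V"
  unfolding resolving_def graph_def by (metis card_mono distinct_card)

lemma res_finite: "graph V E \<Longrightarrow> finite {length W | W. resolving V E W}"
  by (rule finite_subset[of _ "{..card V}"]) (auto dest: res_bound)

lemma res_ex: "graph V E \<Longrightarrow> \<exists>W. resolving V E W"
proof -
  assume g: "graph V E"
  then obtain xs where xs: "set xs = V" "distinct xs" unfolding graph_def using finite_distinct_list by blast
  have "resolving V E xs" unfolding resolving_def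
  proof (intro conjI ballI impI)
    fix a b assume "a \<in> V" "b \<in> V" "rep V E a xs = rep V E b xs"
    then show "a = b" using rep_self[of a xs V E b] xs by simp
  qed (use xs in auto)
  then show ?thesis by blast
qed

lemma cdim_le: "graph V E \<Longrightarrow> resolving V E W \<Longrightarrow> cdim V E \<le> length W"
  unfolding cdim_def by (rule Min_le) (auto simp: res_finite)

lemma basis_ex: "graph V E \<Longrightarrow> \<exists>B. is_basis V E B"
proof -
  assume g: "graph V E"
  have "cdim V E \<in> {length W | W. resolving V E W}"
    unfolding cdim_def using res_finite[OF g] res_ex[OF g] by (intro Min_in) auto
  then show ?thesis unfolding is_basis_def by auto
qed

lemma map_all_one: "(\<forall>w\<in>set W. f w = c) \<Longrightarrow> map f W = replicate (length W) c"
  by (induction W) auto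

lemma map_all_one_iff: "map f W = replicate (length W) c \<longleftrightarrow> (\<forall>w\<in>set W. f w = c)"
  by (induction W) auto



locale bridge =
  fixes V1 V2 :: "'a set" and E1 E2 :: "'a set set" and v1 v2 :: 'a
  assumes g1: "graph V1 E1" and g2: "graph V2 E2"
    and c1: "connected_graph V1 E1" and c2: "connected_graph V2 E2"
    and disj: "V1 \<inter> V2 = {}" and v1: "v1 \<in> V1" and v2: "v2 \<in> V2"
begin

abbreviation "GV \<equiv> V1 \<union> V2"
abbreviation "GE \<equiv> E1 \<union> E2 \<union> {{v1, v2}}"

lemma sym: "bridge V2 V1 E2 E1 v2 v1"
  using g1 g2 c1 c2 disj v1 v2 unfolding bridge_def by blast

lemma GE_sym: "E2 \<union> E1 \<union> {{v2, v1}} = GE"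
proof -
  have "{v2, v1} = {v1, v2}" by (rule insert_commute)
  then show ?thesis by blast
qed
lemma GV_sym: "V2 \<union> V1 = GV" by auto

lemma cross:
  assumes e: "edges_ok GE p" and s: "set p \<subseteq> GV" and ne: "p \<noteq> []" and h: "hd p \<in> V1"
    and z: "\<exists>z\<in>set p. z \<in> V2"
  shows "\<exists>i. Suc i < length p \<and> p ! i = v1 \<and> p ! Suc i = v2"
proof -
  obtain j where j: "j < length p" "p ! j \<in> V2" using z by (metis in_set_conv_nth)
  define m where "m = (LEAST j. j < length p \<and> p ! j \<in> V2)"
  have m: "m < length p" "p ! m \<in> V2" using LeastI[of "\<lambda>j. j < length p \<and> p ! j \<in> V2", OF conjI[OF j]]
    unfolding m_def by auto
  have mm: "\<And>k. k < m \<Longrightarrow> \<not> (k < length p \<and> p ! k \<in> V2)" unfolding m_def by (rule not_less_Least)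
  have "m \<noteq> 0" using h m disj ne by (metis disjoint_iff hd_conv_nth)
  then obtain i where i: "m = Suc i" by (metis not0_implies_Suc)
  have "p ! i \<in> GV" using s m i by (metis Suc_lessD nth_mem subsetD)
  then have pi: "p ! i \<in> V1" using mm[of i] i m by auto
  have "{p ! i, p ! Suc i} \<in> GE" using e m i unfolding edges_ok_def by simp
  moreover have "{p ! i, p ! Suc i} \<notin> E1" using graph_edge[OF g1] m i disj by blast
  moreover have "{p ! i, p ! Suc i} \<notin> E2" using graph_edge[OF g2] pi disj by blast
  ultimately have "{p ! i, p ! Suc i} = {v1, v2}" by blast
  then have "p ! i = v1 \<and> p ! Suc i = v2" using pi v2 disj by (auto simp: doubleton_eq_iff)
  then show ?thesis using m i by blast
qed

lemma path_in_V1: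
  assumes p: "is_path GV GE x w p" and x: "x \<in> V1" and w: "w \<in> V1"
  shows "set p \<subseteq> V1"
proof (rule ccontr)
  assume "\<not> set p \<subseteq> V1"
  then have z: "\<exists>z\<in>set p. z \<in> V2" using p unfolding is_path_alt by auto
  have pp: "length p \<ge> 2" "hd p = x" "last p = w" "distinct p" "set p \<subseteq> GV" "edges_ok GE p"
    using p unfolding is_path_alt by auto
  have ne: "p \<noteq> []" using pp by auto
  obtain i where i: "Suc i < length p" "p ! i = v1" "p ! Suc i = v2"
    using cross[OF pp(6) pp(5) ne] pp(2) x z by blast
  obtain k where k: "Suc k < length (rev p)" "rev p ! k = v1" "rev p ! Suc k = v2"
    using cross[OF edges_rev[OF pp(6)]] pp ne x w z by (auto simp: hd_rev)
  let ?n = "length p"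
  have a: "p ! (?n - Suc k) = v1" using k by (simp add: rev_nth)
  have b: "p ! (?n - Suc (Suc k)) = v2" using k by (simp add: rev_nth)
  have "i = ?n - Suc k" using nth_eq_iff_index_eq[OF pp(4), of i "?n - Suc k"] a i k by simp
  moreover have "Suc i = ?n - Suc (Suc k)"
    using nth_eq_iff_index_eq[OF pp(4), of "Suc i" "?n - Suc (Suc k)"] b i k by simp
  ultimately show False using k by simp
qed

lemma path_iff:
  assumes x: "x \<in> V1" and w: "w \<in> V1"
  shows "is_path GV GE x w p \<longleftrightarrow> is_path V1 E1 x w p"
proof
  assume p: "is_path GV GE x w p"
  have s: "set p \<subseteq> V1" by (rule path_in_V1[OF p x w])
  have "edges_ok E1 p" unfolding edges_ok_def
  proof (intro allI impI)
    fix i assume i: "Suc i < length p"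
    have in1: "p ! i \<in> V1" "p ! Suc i \<in> V1" using s i by (auto dest: nth_mem[of _ p])
    have "{p ! i, p ! Suc i} \<in> GE" using p i unfolding is_path_alt edges_ok_def by simp
    moreover have "{p ! i, p ! Suc i} \<notin> E2" using graph_edge[OF g2] in1 disj by blast
    moreover have "{p ! i, p ! Suc i} \<noteq> {v1, v2}" using in1 v2 disj by (auto simp: doubleton_eq_iff)
    ultimately show "{p ! i, p ! Suc i} \<in> E1" by blast
  qed
  then show "is_path V1 E1 x w p" using p s unfolding is_path_alt by auto
next
  assume "is_path V1 E1 x w p"
  then show "is_path GV GE x w p" unfolding is_path_alt using edges_mono[of E1 GE] by auto
qed

lemma kappa_V1:
  assumes x: "x \<in> V1" and w: "w \<in> V1"
  shows "kappa GV GE x w = kappa V1 E1 x w"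
proof -
  have "\<And>P. disjoint_paths GV GE x w P \<longleftrightarrow> disjoint_paths V1 E1 x w P"
    unfolding disjoint_paths_def using path_iff[OF x w] by simp
  then show ?thesis unfolding kappa_def by simp
qed

lemma path_share:
  assumes x: "x \<in> V1" and w: "w \<in> V2"
    and p: "is_path GV GE x w p" and q: "is_path GV GE x w q"
  shows "p = q \<or> interior p \<inter> interior q \<noteq> {}"
proof -
  have key: "\<exists>i. Suc i < length r \<and> r ! i = v1 \<and> r ! Suc i = v2" if r: "is_path GV GE x w r" for r
  proof -
    have ne: "r \<noteq> []" using r unfolding is_path_alt by auto
    then have "last r \<in> set r" by simp
    note ne this
    then show ?thesis using cross[of r] r x w unfolding is_path_alt by auto
  qed
  have in1: "v1 \<in> interior r" if r: "is_path GV GE x w r" and xv: "x \<noteq> v1" for r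
  proof -
    obtain i where i: "Suc i < length r" "r ! i = v1" "r ! Suc i = v2" using key[OF r] by blast
    have "r \<noteq> []" "hd r = x" using r unfolding is_path_alt by auto
    then have "r ! 0 = x" by (simp add: hd_conv_nth)
    then have "i \<noteq> 0" using xv i by (cases i) simp_all
    then show ?thesis using interior_nth[of i r] i by simp
  qed
  have in2: "v2 \<in> interior r" if r: "is_path GV GE x w r" and xv: "w \<noteq> v2" for r
  proof -
    obtain i where i: "Suc i < length r" "r ! i = v1" "r ! Suc i = v2" using key[OF r] by blast
    have "r \<noteq> []" "last r = w" using r unfolding is_path_alt by auto
    then have lr: "r ! (length r - 1) = w" by (simp add: last_conv_nth)
    have "Suc i \<noteq> length r - 1"
    proof
      assume "Suc i = length r - 1"
      then have "r ! Suc i = w" using lr by simp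
      then show False using xv i by simp
    qed
    then show ?thesis using interior_nth[of "Suc i" r] i by simp
  qed
  have two: "r = [v1, v2]" if r: "is_path GV GE x w r" and xw: "x = v1" "w = v2" for r
  proof -
    obtain i where i: "Suc i < length r" "r ! i = v1" "r ! Suc i = v2"
      using key[OF r] by blast
    have d: "distinct r" "hd r = v1" "last r = v2" "r \<noteq> []" using r xw unfolding is_path_alt by auto
    have "r ! 0 = v1" using d by (simp add: hd_conv_nth)
    then have i0: "i = 0" using i d by (metis Suc_lessD nth_eq_iff_index_eq zero_less_Suc less_trans)
    have "r ! (length r - 1) = v2" using d by (simp add: last_conv_nth)
    then have "Suc 0 = length r - 1" using i d i0 by (metis diff_less nth_eq_iff_index_eq zero_less_one length_greater_0_conv)
    then have "length r = 2" by simp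
    then show ?thesis using i i0
      by (cases r; cases "tl r") auto
  qed
  show ?thesis
  proof (cases "x = v1")
    case False
    then show ?thesis using in1[OF p] in1[OF q] by blast
  next
    case True
    show ?thesis
    proof (cases "w = v2")
      case False
      then show ?thesis using in2[OF p] in2[OF q] by blast
    next
      case True
      then show ?thesis using two[OF p] two[OF q] \<open>x = v1\<close> by simp
    qed
  qed
qed

lemma path_exists:
  assumes x: "x \<in> V1" and w: "w \<in> V2"
  shows "\<exists>p. is_path GV GE x w p"
proof -
  obtain p1 where p1: "p1 \<noteq> []" "hd p1 = x" "last p1 = v1" "distinct p1" "set p1 \<subseteq> V1" "edges_ok E1 p1"
    using conn_walk[OF c1 x v1] by blast
  obtain p2 where p2: "p2 \<noteq> []" "hd p2 = v2" "last p2 = w" "distinct p2" "set p2 \<subseteq> V2" "edges_ok E2 p2"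
    using conn_walk[OF c2 v2 w] by blast
  have "edges_ok GE (p1 @ p2)"
    by (rule edges_append) (use p1 p2 edges_mono[of E1 GE] edges_mono[of E2 GE] in auto)
  moreover have "distinct (p1 @ p2)" using p1 p2 disj by auto
  moreover have "length (p1 @ p2) \<ge> 2" using p1 p2 by (cases p1; cases p2) auto
  ultimately have "is_path GV GE x w (p1 @ p2)" unfolding is_path_alt using p1 p2 by auto
  then show ?thesis by blast
qed

lemma kappa_cross:
  assumes x: "x \<in> V1" and w: "w \<in> V2"
  shows "kappa GV GE x w = 1"
proof -
  have xw: "x \<noteq> w" using x w disj by auto
  obtain p where p: "is_path GV GE x w p" using path_exists[OF x w] by blast
  let ?S = "{card P | P. finite P \<and> disjoint_paths GV GE x w P}"
  have "1 \<in> ?S"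
    using p by (intro CollectI exI[of _ "{p}"]) (simp add: disjoint_paths_def)
  moreover have le: "n \<le> 1" if "n \<in> ?S" for n
  proof -
    obtain P where P: "n = card P" "finite P" "disjoint_paths GV GE x w P" using \<open>n \<in> ?S\<close> by blast
    have "\<forall>a\<in>P. \<forall>b\<in>P. a = b"
      using P(3) path_share[OF x w] unfolding disjoint_paths_def by blast
    then show ?thesis using P card_le_Suc0_iff_eq by auto
  qed
  moreover have "finite ?S" by (rule finite_subset[of _ "{..1}"]) (use le in auto)
  ultimately have "Max ?S = 1" by (intro Max_eqI) auto
  then show ?thesis unfolding kappa_def using xw by (simp add: one_enat_def)
qed

end



context bridge begin

lemma kappa_V2: "x \<in> V2 \<Longrightarrow> w \<in> V2 \<Longrightarrow> kappa GV GE x w = kappa V2 E2 x w"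
proof -
  assume a: "x \<in> V2" "w \<in> V2"
  interpret s: bridge V2 V1 E2 E1 v2 v1 by (rule sym)
  show ?thesis using s.kappa_V1[OF a] unfolding GE_sym GV_sym .
qed

lemma kappa_cross2: "x \<in> V2 \<Longrightarrow> w \<in> V1 \<Longrightarrow> kappa GV GE x w = 1"
proof -
  assume a: "x \<in> V2" "w \<in> V1"
  interpret s: bridge V2 V1 E2 E1 v2 v1 by (rule sym)
  show ?thesis using s.kappa_cross[OF a] unfolding GE_sym GV_sym .
qed

lemma rep_eq_conv: "rep V E a W = rep V E b W \<longleftrightarrow> (\<forall>w\<in>set W. kappa V E a w = kappa V E b w)"
  unfolding rep_def map_eq_conv by blast

lemma rep_one_conv: "rep V E a W = replicate (length W) 1 \<longleftrightarrow> (\<forall>w\<in>set W. kappa V E a w = 1)"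
  unfolding rep_def map_all_one_iff by blast

lemma restrict1:
  assumes r: "resolving GV GE W"
  shows "resolving V1 E1 (filter (\<lambda>w. w \<in> V1) W)"
  unfolding resolving_def
proof (intro conjI ballI impI)
  show "distinct (filter (\<lambda>w. w \<in> V1) W)" using r unfolding resolving_def by simp
  show "set (filter (\<lambda>w. w \<in> V1) W) \<subseteq> V1" by auto
  fix a b assume a: "a \<in> V1" and b: "b \<in> V1"
    and e: "rep V1 E1 a (filter (\<lambda>w. w \<in> V1) W) = rep V1 E1 b (filter (\<lambda>w. w \<in> V1) W)"
  have "\<forall>w\<in>set W. kappa GV GE a w = kappa GV GE b w"
  proof
    fix w assume w: "w \<in> set W"
    then have wG: "w \<in> GV" using r unfolding resolving_def by blast
    show "kappa GV GE a w = kappa GV GE b w"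
    proof (cases "w \<in> V1")
      case True
      then have "kappa V1 E1 a w = kappa V1 E1 b w" using e w unfolding rep_eq_conv by simp
      then show ?thesis using kappa_V1 a b True by simp
    next
      case False
      then have "w \<in> V2" using wG by blast
      then show ?thesis using kappa_cross a b by simp
    qed
  qed
  then have "rep GV GE a W = rep GV GE b W" unfolding rep_eq_conv .
  then show "a = b" using r a b unfolding resolving_def by blast
qed

lemma restrict2:
  assumes r: "resolving GV GE W"
  shows "resolving V2 E2 (filter (\<lambda>w. w \<in> V2) W)"
proof -
  interpret s: bridge V2 V1 E2 E1 v2 v1 by (rule sym)
  show ?thesis using s.restrict1 r unfolding GE_sym GV_sym by blast
qed

lemma gG: "graph GV GE"
proof -
  have ne: "v1 \<noteq> v2" using v1 v2 disj by blast
  have f: "finite GV" "GV \<noteq> {}" using g1 g2 unfolding graph_def by auto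
  have "\<exists>u v. e = {u, v} \<and> u \<in> GV \<and> v \<in> GV \<and> u \<noteq> v" if e: "e \<in> GE" for e
  proof -
    consider "e \<in> E1" | "e \<in> E2" | "e = {v1, v2}" using e by blast
    then show ?thesis
    proof cases
      case 1
      then obtain u v where "e = {u, v}" "u \<in> V1" "v \<in> V1" "u \<noteq> v" using g1 unfolding graph_def by blast
      then show ?thesis by blast
    next
      case 2
      then obtain u v where "e = {u, v}" "u \<in> V2" "v \<in> V2" "u \<noteq> v" using g2 unfolding graph_def by blast
      then show ?thesis by blast
    next
      case 3
      then show ?thesis using ne v1 v2 by blast
    qed
  qed
  then show ?thesis using f unfolding graph_def by blast
qed

lemma lower:
  assumes r: "resolving GV GE W"
  shows "cdim V1 E1 + cdim V2 E2 \<le> length W"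
    and "forces_all_ones V1 E1 \<Longrightarrow> forces_all_ones V2 E2 \<Longrightarrow> cdim V1 E1 + cdim V2 E2 < length W"
proof -
  let ?W1 = "filter (\<lambda>w. w \<in> V1) W" and ?W2 = "filter (\<lambda>w. w \<in> V2) W"
  have r1: "resolving V1 E1 ?W1" by (rule restrict1[OF r])
  have r2: "resolving V2 E2 ?W2" by (rule restrict2[OF r])
  have l1: "cdim V1 E1 \<le> length ?W1" by (rule cdim_le[OF g1 r1])
  have l2: "cdim V2 E2 \<le> length ?W2" by (rule cdim_le[OF g2 r2])
  have sW: "set W \<subseteq> GV" using r unfolding resolving_def by blast
  have "filter (\<lambda>w. \<not> w \<in> V1) W = ?W2"
    by (rule filter_cong) (use sW disj in auto)
  then have len: "length W = length ?W1 + length ?W2"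
    using sum_length_filter_compl[of "\<lambda>w. w \<in> V1" W] by simp
  show "cdim V1 E1 + cdim V2 E2 \<le> length W" using l1 l2 len by simp
  assume f1: "forces_all_ones V1 E1" and f2: "forces_all_ones V2 E2"
  show "cdim V1 E1 + cdim V2 E2 < length W"
  proof (rule ccontr)
    assume "\<not> ?thesis"
    then have e1: "length ?W1 = cdim V1 E1" and e2: "length ?W2 = cdim V2 E2" using l1 l2 len by auto
    obtain x where x: "x \<in> V1" "rep V1 E1 x ?W1 = replicate (length ?W1) 1"
      using f1 r1 e1 unfolding forces_all_ones_def is_basis_def by blast
    obtain y where y: "y \<in> V2" "rep V2 E2 y ?W2 = replicate (length ?W2) 1"
      using f2 r2 e2 unfolding forces_all_ones_def is_basis_def by blast
    have "\<forall>w\<in>set W. kappa GV GE x w = 1"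
    proof
      fix w assume w: "w \<in> set W"
      show "kappa GV GE x w = 1"
      proof (cases "w \<in> V1")
        case True then show ?thesis using x w kappa_V1 unfolding rep_one_conv by simp
      next
        case False then show ?thesis using x w sW kappa_cross by blast
      qed
    qed
    moreover have "\<forall>w\<in>set W. kappa GV GE y w = 1"
    proof
      fix w assume w: "w \<in> set W"
      show "kappa GV GE y w = 1"
      proof (cases "w \<in> V2")
        case True then show ?thesis using y w kappa_V2 unfolding rep_one_conv by simp
      next
        case False then show ?thesis using y w sW kappa_cross2 by blast
      qed
    qed
    ultimately have "rep GV GE x W = rep GV GE y W" unfolding rep_eq_conv by simp
    then have "x = y" using r x y unfolding resolving_def by blast
    then show False using x y disj by blast
  qed
qed

lemma res_combine:
  assumes r1: "resolving V1 E1 B1" and r2: "resolving V2 E2 B2"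
    and X: "set X \<subseteq> V1" "distinct X" "set X \<inter> set B1 = {}"
    and H: "\<And>x y. x \<in> V1 \<Longrightarrow> y \<in> V2 \<Longrightarrow> rep V1 E1 x B1 = replicate (length B1) 1 \<Longrightarrow>
              rep V2 E2 y B2 = replicate (length B2) 1 \<Longrightarrow> \<exists>w\<in>set X. kappa V1 E1 x w \<noteq> 1"
  shows "resolving GV GE (B1 @ B2 @ X)"
proof -
  let ?W = "B1 @ B2 @ X"
  have s1: "set B1 \<subseteq> V1" and s2: "set B2 \<subseteq> V2" using r1 r2 unfolding resolving_def by auto
  have mixed: False if a: "a \<in> V1" and b: "b \<in> V2"
      and e: "\<forall>w\<in>set ?W. kappa GV GE a w = kappa GV GE b w" for a b
  proof -
    have "\<forall>w\<in>set B1. kappa V1 E1 a w = 1"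
      using e s1 a b kappa_V1 kappa_cross2 by fastforce
    then have o1: "rep V1 E1 a B1 = replicate (length B1) 1" unfolding rep_one_conv .
    have "\<forall>w\<in>set B2. kappa V2 E2 b w = 1"
      using e s2 a b kappa_V2 kappa_cross by fastforce
    then have o2: "rep V2 E2 b B2 = replicate (length B2) 1" unfolding rep_one_conv .
    obtain w where w: "w \<in> set X" "kappa V1 E1 a w \<noteq> 1" using H[OF a b o1 o2] by blast
    have "kappa GV GE a w = kappa GV GE b w" using e w by simp
    then show False using w X a b kappa_V1 kappa_cross2 by auto
  qed
  show ?thesis unfolding resolving_def
  proof (intro conjI ballI impI)
    show "distinct ?W" using r1 r2 X s1 s2 disj unfolding resolving_def by auto
    show "set ?W \<subseteq> GV" using s1 s2 X by auto
    fix a b assume a: "a \<in> GV" and b: "b \<in> GV" and e0: "rep GV GE a ?W = rep GV GE b ?W"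
    have e: "\<forall>w\<in>set ?W. kappa GV GE a w = kappa GV GE b w" using e0 unfolding rep_eq_conv .
    show "a = b"
    proof (cases "a \<in> V1")
      case aT: True
      show ?thesis
      proof (cases "b \<in> V1")
        case True
        have "\<forall>w\<in>set B1. kappa V1 E1 a w = kappa V1 E1 b w"
        proof
          fix w assume w: "w \<in> set B1"
          then have "w \<in> V1" using s1 by blast
          moreover have "kappa GV GE a w = kappa GV GE b w" using e w by simp
          ultimately show "kappa V1 E1 a w = kappa V1 E1 b w" using kappa_V1[OF aT] kappa_V1[OF True] by simp
        qed
        then show ?thesis using r1 aT True unfolding resolving_def rep_eq_conv by blast
      next
        case False
        then show ?thesis using mixed[OF aT _ e] b by blast
      qed
    next
      case aF: False
      then have aT: "a \<in> V2" using a by blast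
      show ?thesis
      proof (cases "b \<in> V1")
        case True
        then show ?thesis using mixed[OF True aT] e by auto
      next
        case False
        then have bT: "b \<in> V2" using b by blast
        have "\<forall>w\<in>set B2. kappa V2 E2 a w = kappa V2 E2 b w"
        proof
          fix w assume w: "w \<in> set B2"
          then have "w \<in> V2" using s2 by blast
          moreover have "kappa GV GE a w = kappa GV GE b w" using e w by simp
          ultimately show "kappa V2 E2 a w = kappa V2 E2 b w" using kappa_V2[OF aT] kappa_V2[OF bT] by simp
        qed
        then show ?thesis using r2 aT bT unfolding resolving_def rep_eq_conv by blast
      qed
    qed
  qed
qed

lemma not_in_ones: "x \<in> set B \<Longrightarrow> rep V E x B \<noteq> replicate (length B) 1"
  unfolding rep_one_conv kappa_def by (auto simp: one_enat_def)

lemma upper_both: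
  assumes r1: "resolving V1 E1 B1" and r2: "resolving V2 E2 B2"
  shows "cdim GV GE \<le> length B1 + length B2 + 1"
proof (cases "\<exists>x\<in>V1. rep V1 E1 x B1 = replicate (length B1) 1")
  case True
  then obtain x1 where x1: "x1 \<in> V1" "rep V1 E1 x1 B1 = replicate (length B1) 1" by blast
  have nb: "x1 \<notin> set B1" using not_in_ones x1 by metis
  have "resolving GV GE (B1 @ B2 @ [x1])"
  proof (rule res_combine[OF r1 r2])
    show "set [x1] \<subseteq> V1" "distinct [x1]" "set [x1] \<inter> set B1 = {}" using x1 nb by auto
    fix x y assume x: "x \<in> V1" and "y \<in> V2" and o: "rep V1 E1 x B1 = replicate (length B1) 1"
    have "x = x1" using r1 x x1 o unfolding resolving_def by metis
    then show "\<exists>w\<in>set [x1]. kappa V1 E1 x w \<noteq> 1" by (simp add: kappa_def)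
  qed
  then show ?thesis using cdim_le[OF gG] by fastforce
next
  case False
  have "resolving GV GE (B1 @ B2 @ [])"
    by (rule res_combine[OF r1 r2]) (use False in auto)
  then show ?thesis using cdim_le[OF gG] by fastforce
qed

lemma upper_not:
  assumes r1: "resolving V1 E1 B1" and r2: "resolving V2 E2 B2"
    and n: "(\<forall>x\<in>V1. rep V1 E1 x B1 \<noteq> replicate (length B1) 1) \<or>
            (\<forall>y\<in>V2. rep V2 E2 y B2 \<noteq> replicate (length B2) 1)"
  shows "cdim GV GE \<le> length B1 + length B2"
proof -
  have "resolving GV GE (B1 @ B2 @ [])"
    by (rule res_combine[OF r1 r2]) (use n in auto)
  then show ?thesis using cdim_le[OF gG] by fastforce
qed

end

theorem mainTheorem11:
  fixes V1 V2 :: "'a set" and E1 E2 :: "'a set set" and v1 v2 :: 'a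
  assumes "graph V1 E1" and "graph V2 E2"
    and "connected_graph V1 E1" and "connected_graph V2 E2"
    and "V1 \<inter> V2 = {}" and "v1 \<in> V1" and "v2 \<in> V2"
  shows "cdim (V1 \<union> V2) (E1 \<union> E2 \<union> {{v1, v2}}) =
    (if forces_all_ones V1 E1 \<and> forces_all_ones V2 E2
     then cdim V1 E1 + cdim V2 E2 + 1
     else cdim V1 E1 + cdim V2 E2)"
proof -
  interpret bridge V1 V2 E1 E2 v1 v2 using assms by unfold_locales
  obtain W where W: "is_basis GV GE W" using basis_ex[OF gG] by blast
  have rW: "resolving GV GE W" and lW: "length W = cdim GV GE" using W unfolding is_basis_def by auto
  obtain B1 where B1: "is_basis V1 E1 B1" using basis_ex[OF g1] by blast
  obtain B2 where B2: "is_basis V2 E2 B2" using basis_ex[OF g2] by blast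
  show ?thesis
  proof (cases "forces_all_ones V1 E1 \<and> forces_all_ones V2 E2")
    case True
    have "cdim V1 E1 + cdim V2 E2 < cdim GV GE" using lower(2)[OF rW] True lW by simp
    moreover have "cdim GV GE \<le> cdim V1 E1 + cdim V2 E2 + 1"
      using upper_both B1 B2 unfolding is_basis_def by fastforce
    ultimately show ?thesis using True by simp
  next
    case False
    have "cdim V1 E1 + cdim V2 E2 \<le> cdim GV GE" using lower(1)[OF rW] lW by simp
    moreover have "cdim GV GE \<le> cdim V1 E1 + cdim V2 E2"
    proof (cases "forces_all_ones V1 E1")
      case False
      then obtain C1 where C1: "is_basis V1 E1 C1"
        "\<forall>x\<in>V1. rep V1 E1 x C1 \<noteq> replicate (length C1) 1"
        unfolding forces_all_ones_def by blast
      show ?thesis using upper_not[of C1 B2] C1 B2 unfolding is_basis_def by fastforce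
    next
      case True
      then have "\<not> forces_all_ones V2 E2" using \<open>\<not> (forces_all_ones V1 E1 \<and> forces_all_ones V2 E2)\<close> by blast
      then obtain C2 where C2: "is_basis V2 E2 C2"
        "\<forall>y\<in>V2. rep V2 E2 y C2 \<noteq> replicate (length C2) 1"
        unfolding forces_all_ones_def by blast
      show ?thesis using upper_not[of B1 C2] B1 C2 unfolding is_basis_def by fastforce
    qed
    ultimately show ?thesis using False by simp
  qed
qed

end
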